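(* Let $S \subset \mathbb{R}^3$ be a path of length $1$ which is a segment of a (planar) logarithmic spiral starting at its center $0$ and ending at a point $u$. Then the distortion of $S$, namely $\sup_{v\neq w \in S} d_S(v,w)/|v-w|$ where $d_S(v,w)$ is the length of the subarc of $S$ between $v$ and $w$, equals $1/|u|$. Moreover, for every path $\alpha\subset\mathbb{R}^3$ of length $1$ whose diameter is at most $2|u|$, one has $\sup_{v\neq w\in\alpha} d_\alpha(v,w)/|v-w| \geq \frac{1}{2}\cdot\frac{1}{|u|}$.
   Context: A logarithmic spiral centered at $0$ is (up to rotation and scaling, inside a plane through $0$) the curve $\{0\}\cup\{e^{ks}(\cos s,\sin s): s\in\mathbb{R}\}$ for some $k>0$; a segment starting at the center is the closure of its part with $s\in(-\infty,s_1]$. $|\cdot|$ denotes the Euclidean norm. *)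

theory Defs
  imports "HOL-Analysis.Analysis" "HOL-Library.Extended_Real"
begin

definition curve_length :: "(real \<Rightarrow> 'a::metric_space) \<Rightarrow> real \<Rightarrow> real \<Rightarrow> ereal" where
  "curve_length g a b =
     (SUP p \<in> {(n, t). t 0 = a \<and> t n = b \<and> (\<forall>i<n. t i \<le> t (Suc i))}.
        ereal (\<Sum>i<fst p. dist (g (snd p i)) (g (snd p (Suc i)))))"

definition distortion :: "(real \<Rightarrow> 'a::metric_space) \<Rightarrow> ereal" where
  "distortion g =
     (SUP p \<in> {(s, t). 0 \<le> s \<and> s < t \<and> t \<le> 1 \<and> g s \<noteq> g t}.
        curve_length g (fst p) (snd p) / ereal (dist (g (fst p)) (g (snd p))))"

definition log_spiral :: "real \<Rightarrow> real \<Rightarrow> real^3 \<Rightarrow> real^3 \<Rightarrow> real \<Rightarrow> real^3" where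
  "log_spiral c k e1 e2 s = (c * exp (k * s)) *\<^sub>R (cos s *\<^sub>R e1 + sin s *\<^sub>R e2)"

end

theory Submission
  imports Defs
begin


definition Parts :: "real \<Rightarrow> real \<Rightarrow> (nat \<times> (nat \<Rightarrow> real)) set" where
  "Parts a b = {(n, t). t 0 = a \<and> t n = b \<and> (\<forall>i<n. t i \<le> t (Suc i))}"

definition Lsum :: "(real \<Rightarrow> 'a::metric_space) \<Rightarrow> nat \<times> (nat \<Rightarrow> real) \<Rightarrow> real" where
  "Lsum f p = (\<Sum>i<fst p. dist (f (snd p i)) (f (snd p (Suc i))))"

lemma CL_def2: "curve_length f a b = (SUP p \<in> Parts a b. ereal (Lsum f p))"
  unfolding curve_length_def Parts_def Lsum_def by simp

lemma CL_ge: "p \<in> Parts a b \<Longrightarrow> ereal (Lsum f p) \<le> curve_length f a b"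
  unfolding CL_def2 by (rule SUP_upper)

lemma CL_le: "(\<And>p. p \<in> Parts a b \<Longrightarrow> Lsum f p \<le> B) \<Longrightarrow> curve_length f a b \<le> ereal B"
  unfolding CL_def2 by (rule SUP_least) simp

lemma Lsum_nonneg: "0 \<le> Lsum f p"
  unfolding Lsum_def by (simp add: sum_nonneg)

lemma chain: "(\<forall>i<m. t i \<le> t (Suc i)) \<Longrightarrow> i \<le> j \<Longrightarrow> j \<le> m \<Longrightarrow> t i \<le> (t j::real)"
proof (induction j)
  case 0 then show ?case by simp
next
  case (Suc j)
  show ?case
  proof (cases "i = Suc j")
    case False
    then have "t i \<le> t j" using Suc by simp
    also have "t j \<le> t (Suc j)" using Suc by simp
    finally show ?thesis .
  qed simp
qed

lemma Parts_range: "(m, t) \<in> Parts a b \<Longrightarrow> i \<le> m \<Longrightarrow> a \<le> t i \<and> t i \<le> b"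
  unfolding Parts_def using chain[of m t 0 i] chain[of m t i m] by auto

lemma clamp:
  fixes f :: "real \<Rightarrow> 'a::metric_space"
  shows "(\<forall>i<m. \<tau> i \<le> \<tau> (Suc i)) \<Longrightarrow> (\<forall>i\<le>m. \<tau> i < \<tau> m \<longrightarrow> \<tau> i \<le> t) \<Longrightarrow> t \<le> \<tau> m \<Longrightarrow>
    (\<Sum>i<m. dist (f (\<tau> i)) (f (\<tau> (Suc i)))) \<le>
    (\<Sum>i<m. dist (f (min (\<tau> i) t)) (f (min (\<tau> (Suc i)) t))) + dist (f t) (f (\<tau> m))"
proof (induction m)
  case 0 then show ?case by simp
next
  case (Suc m)
  show ?case
  proof (cases "\<tau> m < \<tau> (Suc m)")
    case True
    then have "\<tau> m \<le> t" using Suc.prems(2) by auto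
    have le: "\<tau> i \<le> t" if "i \<le> m" for i
      using chain[of "Suc m" \<tau> i m] Suc.prems(1) that \<open>\<tau> m \<le> t\<close> by auto
    have "(\<Sum>i<m. dist (f (min (\<tau> i) t)) (f (min (\<tau> (Suc i)) t))) = 
          (\<Sum>i<m. dist (f (\<tau> i)) (f (\<tau> (Suc i))))"
      by (rule sum.cong) (auto simp: le min_absorb1)
    moreover have "min (\<tau> m) t = \<tau> m" "min (\<tau> (Suc m)) t = t"
      using \<open>\<tau> m \<le> t\<close> Suc.prems(3) by auto
    moreover have "dist (f (\<tau> m)) (f (\<tau> (Suc m))) \<le> dist (f (\<tau> m)) (f t) + dist (f t) (f (\<tau> (Suc m)))"
      by (rule dist_triangle)
    ultimately show ?thesis by simp
  next
    case False
    then have eq: "\<tau> m = \<tau> (Suc m)" using Suc.prems(1) by force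
    have "(\<Sum>i<m. dist (f (\<tau> i)) (f (\<tau> (Suc i)))) \<le>
    (\<Sum>i<m. dist (f (min (\<tau> i) t)) (f (min (\<tau> (Suc i)) t))) + dist (f t) (f (\<tau> m))"
      apply (rule Suc.IH)
      using Suc.prems eq by auto
    then show ?thesis using eq by simp
  qed
qed

lemma sum_split_add: "(\<Sum>i<(m1::nat) + m2. h i) = (\<Sum>i<m1. h i) + (\<Sum>i<m2. (h (m1 + i)::real))"
  by (induction m2) (simp_all add: add.assoc)

lemma concat:
  assumes "(m1, t1) \<in> Parts a b" "(m2, t2) \<in> Parts b c"
  shows "(m1 + m2, \<lambda>i. if i \<le> m1 then t1 i else t2 (i - m1)) \<in> Parts a c"
    "Lsum f (m1 + m2, \<lambda>i. if i \<le> m1 then t1 i else t2 (i - m1)) = Lsum f (m1, t1) + Lsum f (m2, t2)"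
proof -
  let ?t = "\<lambda>i. if i \<le> m1 then t1 i else t2 (i - m1)"
  have A: "t1 0 = a" "t1 m1 = b" "\<forall>i<m1. t1 i \<le> t1 (Suc i)" using assms(1) by (auto simp: Parts_def)
  have B: "t2 0 = b" "t2 m2 = c" "\<forall>i<m2. t2 i \<le> t2 (Suc i)" using assms(2) by (auto simp: Parts_def)
  have sh: "?t (m1 + i) = t2 i" for i using A B by (cases i) auto
  show "(m1 + m2, ?t) \<in> Parts a c"
  proof -
    have "?t (m1 + m2) = c" using sh[of m2] B by simp
    moreover have "?t 0 = a" using A by simp
    moreover have "?t i \<le> ?t (Suc i)" if i: "i < m1 + m2" for i
    proof (cases "Suc i \<le> m1")
      case True then show ?thesis using A by simp
    next
      case False
      then obtain j where j: "i = m1 + j" by (metis le_Suc_ex not_less_eq_eq)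
      have e1: "?t i = t2 j" unfolding j by (rule sh)
      have e2: "?t (Suc i) = t2 (Suc j)" unfolding j add_Suc_right[symmetric] by (rule sh)
      have "j < m2" using i j by simp
      then show ?thesis unfolding e1 e2 using B(3) by blast
    qed
    ultimately show ?thesis unfolding Parts_def by blast
  qed
  have "(\<Sum>i<m1 + m2. dist (f (?t i)) (f (?t (Suc i)))) =
        (\<Sum>i<m1. dist (f (?t i)) (f (?t (Suc i)))) + (\<Sum>i<m2. dist (f (?t (m1 + i))) (f (?t (Suc (m1 + i)))))"
    by (rule sum_split_add)
  also have "(\<Sum>i<m1. dist (f (?t i)) (f (?t (Suc i)))) = (\<Sum>i<m1. dist (f (t1 i)) (f (t1 (Suc i))))"
    by (rule sum.cong) auto
  also have "(\<Sum>i<m2. dist (f (?t (m1 + i))) (f (?t (Suc (m1 + i))))) = (\<Sum>i<m2. dist (f (t2 i)) (f (t2 (Suc i))))"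
  proof (rule sum.cong[OF refl])
    fix i
    have "?t (Suc (m1 + i)) = t2 (Suc i)" unfolding add_Suc_right[symmetric] by (rule sh)
    then show "dist (f (?t (m1 + i))) (f (?t (Suc (m1 + i)))) = dist (f (t2 i)) (f (t2 (Suc i)))"
      by (simp only: sh)
  qed
  finally show "Lsum f (m1 + m2, ?t) = Lsum f (m1, t1) + Lsum f (m2, t2)"
    unfolding Lsum_def by simp
qed



definition P :: "real \<Rightarrow> real \<Rightarrow> real^3 \<Rightarrow> real^3 \<Rightarrow> real \<Rightarrow> real^3" where
  "P c k e1 e2 r = r *\<^sub>R (cos (ln (r / c) / k) *\<^sub>R e1 + sin (ln (r / c) / k) *\<^sub>R e2)"

lemma norm_comb:
  fixes e1 e2 :: "real^3"
  assumes "norm e1 = 1" "norm e2 = 1" "e1 \<bullet> e2 = 0"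
  shows "(norm (a *\<^sub>R e1 + b *\<^sub>R e2))^2 = a^2 + b^2"
proof -
  have "e1 \<bullet> e1 = 1" "e2 \<bullet> e2 = 1" "e2 \<bullet> e1 = 0"
    using assms by (simp_all add: power2_norm_eq_inner[symmetric] inner_commute)
  then show ?thesis
    using assms(3) unfolding power2_norm_eq_inner by (simp add: inner_add_left inner_add_right power2_eq_square)
qed

lemma dist_P:
  fixes e1 e2 :: "real^3"
  assumes "norm e1 = 1" "norm e2 = 1" "e1 \<bullet> e2 = 0"
  shows "(dist (P c k e1 e2 x) (P c k e1 e2 y))^2 = x^2 + y^2 - 2*x*y*cos (ln (x/c)/k - ln (y/c)/k)"
proof -
  define a where "a = ln (x/c)/k"
  define b where "b = ln (y/c)/k"
  have "P c k e1 e2 x - P c k e1 e2 y = (x * cos a - y * cos b) *\<^sub>R e1 + (x * sin a - y * sin b) *\<^sub>R e2"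
    unfolding P_def a_def b_def by (simp add: algebra_simps)
  then have "(dist (P c k e1 e2 x) (P c k e1 e2 y))^2 = (x * cos a - y * cos b)^2 + (x * sin a - y * sin b)^2"
    by (simp add: dist_norm norm_comb[OF assms])
  also have "\<dots> = x^2 * ((sin a)^2 + (cos a)^2) + y^2 * ((sin b)^2 + (cos b)^2) - 2*x*y*(cos a * cos b + sin a * sin b)"
    by (simp add: power2_eq_square; algebra)
  also have "\<dots> = x^2 + y^2 - 2*x*y*cos (a - b)"
    unfolding sin_cos_squared_add by (simp add: cos_diff)
  finally show ?thesis unfolding a_def b_def .
qed

lemma norm_P:
  fixes e1 e2 :: "real^3"
  assumes "norm e1 = 1" "norm e2 = 1" "e1 \<bullet> e2 = 0"
  shows "norm (P c k e1 e2 x) = \<bar>x\<bar>"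
proof -
  have "(norm (P c k e1 e2 x))^2 = x^2"
    using dist_P[OF assms, of c k x 0] by (simp add: P_def)
  then show ?thesis by (metis norm_ge_zero power2_eq_iff_nonneg abs_ge_zero power2_abs)
qed

lemma P_scale:
  fixes e1 e2 :: "real^3"
  assumes "norm e1 = 1" "norm e2 = 1" "e1 \<bullet> e2 = 0"
    and "c > 0" "l > 0" "x \<ge> 0" "y \<ge> 0"
  shows "dist (P c k e1 e2 (l*x)) (P c k e1 e2 (l*y)) = l * dist (P c k e1 e2 x) (P c k e1 e2 y)"
proof (cases "x = 0 \<or> y = 0")
  case True
  have P0: "P c k e1 e2 0 = 0" by (simp add: P_def)
  from True show ?thesis
    using assms by (auto simp: P0 norm_P[OF assms(1-3)] dist_commute)
next
  case False
  then have "x > 0" "y > 0" using assms by auto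
  have lx: "ln (l*x/c) = ln l + ln (x/c)" using ln_mult[of l "x/c"] \<open>x > 0\<close> assms by (simp add: mult.assoc)
  have ly: "ln (l*y/c) = ln l + ln (y/c)" using ln_mult[of l "y/c"] \<open>y > 0\<close> assms by (simp add: mult.assoc)
  have "ln (l*x/c)/k - ln (l*y/c)/k = ln (x/c)/k - ln (y/c)/k"
    unfolding lx ly by (simp add: diff_divide_distrib[symmetric])
  then have ce: "cos (ln (l*x/c)/k - ln (l*y/c)/k) = cos (ln (x/c)/k - ln (y/c)/k)" by simp
  have "(dist (P c k e1 e2 (l*x)) (P c k e1 e2 (l*y)))^2 = (l * dist (P c k e1 e2 x) (P c k e1 e2 y))^2"
    unfolding ce power_mult_distrib dist_P[OF assms(1-3)] by (simp add: algebra_simps power2_eq_square)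
  then show ?thesis using assms by (simp add: power2_eq_iff_nonneg)
qed

lemma spiral_P:
  assumes "c > 0" "k > 0"
  shows "log_spiral c k e1 e2 s = P c k e1 e2 (c * exp (k * s))"
  using assms by (simp add: P_def log_spiral_def)



locale spir =
  fixes g :: "real \<Rightarrow> real^3" and e1 e2 u :: "real^3" and c k s1 :: real
  assumes cpos: "c > 0" and kpos: "k > 0"
    and e1: "norm e1 = 1" and e2: "norm e2 = 1" and e12: "e1 \<bullet> e2 = 0"
    and garc: "arc g"
    and gim: "g ` {0..1} = {0} \<union> {log_spiral c k e1 e2 s | s. s \<le> s1}"
    and g0: "g 0 = 0" and udef: "u = log_spiral c k e1 e2 s1" and g1: "g 1 = u"
    and len: "curve_length g 0 1 = 1"
begin

abbreviation "Q \<equiv> P c k e1 e2"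
definition "n t = norm (g t)"

lemma Q0: "Q 0 = 0" by (simp add: P_def)

lemma normQ: "r \<ge> 0 \<Longrightarrow> norm (Q r) = r"
  using norm_P[OF e1 e2 e12] by simp

lemma gQ: assumes "t \<in> {0..1}" shows "g t = Q (n t)"
proof -
  have "g t \<in> {0} \<union> {log_spiral c k e1 e2 s | s. s \<le> s1}" using gim assms by blast
  then show ?thesis
  proof
    assume "g t \<in> {0}" then show ?thesis by (simp add: n_def Q0)
  next
    assume "g t \<in> {log_spiral c k e1 e2 s | s. s \<le> s1}"
    then obtain s where "g t = Q (c * exp (k * s))" using spiral_P[OF cpos kpos] by auto
    then show ?thesis using normQ[of "c * exp (k * s)"] cpos by (simp add: n_def)
  qed
qed

lemma nu_pos: "norm u > 0"
  using udef spiral_P[OF cpos kpos] normQ[of "c * exp (k * s1)"] cpos by simp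

lemma nnn: "n x \<ge> 0" by (simp add: n_def)

lemma n0: "n 0 = 0" by (simp add: n_def g0)
lemma n1: "n 1 = norm u" by (simp add: n_def g1)

lemma ncont: "continuous_on {0..1} n"
  unfolding n_def using garc arc_imp_path path_def continuous_on_norm by blast

lemma ninj: "inj_on n {0..1}"
proof (rule inj_onI)
  fix x y assume "x \<in> {0..1}" "y \<in> {0..1}" "n x = n y"
  then have "g x = g y" using gQ by metis
  then show "x = y" using garc \<open>x \<in> {0..1}\<close> \<open>y \<in> {0..1}\<close> by (auto simp: arc_def inj_on_def)
qed

lemma nmid: "0 < x \<Longrightarrow> x < 1 \<Longrightarrow> n x < norm u"
  using continuous_inj_imp_mono[of 0 x 1 n, OF _ _ ncont ninj] n0 n1 nu_pos nnn[of x] by auto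

lemma nstrict: assumes "0 \<le> x" "x < y" "y \<le> 1" shows "n x < n y"
proof (cases "y = 1")
  case True
  then show ?thesis using assms nmid n0 n1 nu_pos by (cases "x = 0") auto
next
  case False
  then have y1: "y < 1" using assms by simp
  show ?thesis
  proof (cases "x = 0")
    case True then show ?thesis using continuous_inj_imp_mono[of 0 y 1 n, OF _ _ ncont ninj] n0 n1 nu_pos assms y1 nnn[of y] by auto
  next
    case False
    have c: "continuous_on {x..1} n" using ncont by (rule continuous_on_subset) (use assms in auto)
    have i: "inj_on n {x..1}" using ninj by (rule inj_on_subset) (use assms in auto)
    show ?thesis using continuous_inj_imp_mono[of x y 1 n, OF _ _ c i] nmid[of x] assms y1 False n1 by auto
  qed
qed

lemma nmono: "0 \<le> x \<Longrightarrow> x \<le> y \<Longrightarrow> y \<le> 1 \<Longrightarrow> n x \<le> n y"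
  using nstrict[of x y] by (cases "x = y") auto

lemma nsurj: "0 \<le> r \<Longrightarrow> r \<le> norm u \<Longrightarrow> r \<in> n ` {0..1}"
  using IVT'[of n 0 r 1, OF _ _ _ ncont] n0 n1 by auto

lemma transfer: assumes "0 \<le> s" "s \<le> t" "t \<le> 1"
  shows "curve_length g s t = curve_length Q (n s) (n t)"
proof (rule antisym)
  show "curve_length g s t \<le> curve_length Q (n s) (n t)"
    unfolding CL_def2[of g]
  proof (rule SUP_least)
    fix p assume p: "p \<in> Parts s t"
    obtain m \<tau> where pe: "p = (m, \<tau>)" by fastforce
    have r: "i \<le> m \<Longrightarrow> 0 \<le> \<tau> i \<and> \<tau> i \<le> 1" for i using Parts_range[of m \<tau> s t i] p pe assms by auto
    have "(m, n \<circ> \<tau>) \<in> Parts (n s) (n t)"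
      using p pe r nmono unfolding Parts_def by auto
    moreover have "Lsum g p = Lsum Q (m, n \<circ> \<tau>)"
      unfolding pe Lsum_def by (auto intro!: sum.cong simp: gQ r)
    ultimately show "ereal (Lsum g p) \<le> curve_length Q (n s) (n t)" using CL_ge by metis
  qed
next
  show "curve_length Q (n s) (n t) \<le> curve_length g s t"
    unfolding CL_def2[of Q]
  proof (rule SUP_least)
    fix p assume p: "p \<in> Parts (n s) (n t)"
    obtain m \<rho> where pe: "p = (m, \<rho>)" by fastforce
    define \<nu> where "\<nu> = inv_into {0..1} n"
    have r: "i \<le> m \<Longrightarrow> \<rho> i \<in> n ` {0..1}" for i
      using Parts_range[of m \<rho> "n s" "n t" i] p pe assms nmono[of 0 s] nmono[of t 1] n0 n1
      by (intro nsurj) auto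
    have r1: "i \<le> m \<Longrightarrow> \<nu> (\<rho> i) \<in> {0..1}" for i unfolding \<nu>_def using r by (metis inv_into_into)
    have r2: "i \<le> m \<Longrightarrow> n (\<nu> (\<rho> i)) = \<rho> i" for i unfolding \<nu>_def using r by (simp add: f_inv_into_f)
    have "(m, \<nu> \<circ> \<rho>) \<in> Parts s t"
      unfolding Parts_def
    proof (clarsimp, intro conjI allI impI)
      show "\<nu> (\<rho> 0) = s" using p pe assms ninj unfolding \<nu>_def Parts_def by (auto intro: inv_into_f_f)
      show "\<nu> (\<rho> m) = t" using p pe assms ninj unfolding \<nu>_def Parts_def by (auto intro: inv_into_f_f)
      fix i assume i: "i < m"
      show "\<nu> (\<rho> i) \<le> \<nu> (\<rho> (Suc i))"
      proof (rule ccontr)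
        assume "\<not> ?thesis"
        then have "n (\<nu> (\<rho> (Suc i))) < n (\<nu> (\<rho> i))"
          using r1[of i] r1[of "Suc i"] i by (intro nstrict) auto
        then show False using r2[of i] r2[of "Suc i"] i p pe unfolding Parts_def by auto
      qed
    qed
    moreover have "Lsum Q p = Lsum g (m, \<nu> \<circ> \<rho>)"
    proof -
      have pt: "dist (Q (\<rho> i)) (Q (\<rho> (Suc i))) = dist (g (\<nu> (\<rho> i))) (g (\<nu> (\<rho> (Suc i))))" if i: "i < m" for i
      proof -
        have "g (\<nu> (\<rho> i)) = Q (\<rho> i)" using gQ[OF r1[of i]] r2[of i] i by simp
        moreover have "g (\<nu> (\<rho> (Suc i))) = Q (\<rho> (Suc i))" using gQ[OF r1[of "Suc i"]] r2[of "Suc i"] i by simp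
        ultimately show ?thesis by simp
      qed
      show ?thesis unfolding pe Lsum_def using pt by (auto intro!: sum.cong)
    qed
    ultimately show "ereal (Lsum Q p) \<le> curve_length g s t" using CL_ge by metis
  qed
qed

end


context spir begin

lemma scale_le: assumes "l > 0" "0 \<le> a"
  shows "curve_length Q (l * a) (l * b) \<le> ereal l * curve_length Q a b"
  unfolding CL_def2[of Q "l*a"]
proof (rule SUP_least)
  fix p assume p: "p \<in> Parts (l * a) (l * b)"
  obtain m \<rho> where pe: "p = (m, \<rho>)" by fastforce
  have la: "0 \<le> l * a" using assms by simp
  have r: "i \<le> m \<Longrightarrow> 0 \<le> \<rho> i" for i using Parts_range[of m \<rho> "l*a" "l*b" i] p pe la by auto
  have "(m, \<lambda>i. \<rho> i / l) \<in> Parts a b"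
    using p pe assms unfolding Parts_def by (auto simp: divide_right_mono)
  then have le: "ereal (Lsum Q (m, \<lambda>i. \<rho> i / l)) \<le> curve_length Q a b" by (rule CL_ge)
  have pt: "dist (Q (\<rho> i)) (Q (\<rho> (Suc i))) = l * dist (Q (\<rho> i / l)) (Q (\<rho> (Suc i) / l))" if "i < m" for i
    using P_scale[OF e1 e2 e12 cpos assms(1), of "\<rho> i / l" "\<rho> (Suc i) / l" k] r[of i] r[of "Suc i"] that assms
    by simp
  have "Lsum Q p = l * Lsum Q (m, \<lambda>i. \<rho> i / l)"
    unfolding pe Lsum_def using pt by (simp add: sum_distrib_left)
  then have "ereal (Lsum Q p) = ereal l * ereal (Lsum Q (m, \<lambda>i. \<rho> i / l))" by simp
  also have "\<dots> \<le> ereal l * curve_length Q a b"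
    using le assms by (intro ereal_mult_left_mono) auto
  finally show "ereal (Lsum Q p) \<le> ereal l * curve_length Q a b" .
qed

lemma scale_eq: assumes "l > 0" "0 \<le> a"
  shows "curve_length Q (l * a) (l * b) = ereal l * curve_length Q a b"
proof (rule antisym)
  show "curve_length Q (l * a) (l * b) \<le> ereal l * curve_length Q a b" by (rule scale_le[OF assms])
  have "curve_length Q a b = curve_length Q ((1/l) * (l * a)) ((1/l) * (l * b))" using assms by simp
  also have "\<dots> \<le> ereal (1/l) * curve_length Q (l * a) (l * b)"
    using assms by (intro scale_le) auto
  finally have "ereal l * curve_length Q a b \<le> ereal l * (ereal (1/l) * curve_length Q (l * a) (l * b))"
    using assms by (intro ereal_mult_left_mono) auto
  also have "\<dots> = curve_length Q (l * a) (l * b)"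
    using assms by (simp add: mult.assoc[symmetric])
  finally show "ereal l * curve_length Q a b \<le> curve_length Q (l * a) (l * b)" .
qed

lemma F0u: "curve_length Q 0 (norm u) = 1"
  using transfer[of 0 1] n0 n1 len by simp

lemma F0b: assumes "b > 0" shows "curve_length Q 0 b = ereal (b / norm u)"
proof -
  have "curve_length Q 0 b = curve_length Q ((b / norm u) * 0) ((b / norm u) * norm u)"
    using nu_pos by simp
  also have "\<dots> = ereal (b / norm u) * 1"
    using nu_pos assms by (subst scale_eq) (auto simp: F0u)
  finally show ?thesis by simp
qed

lemma Fbound: assumes "0 \<le> a" "a < b"
  shows "curve_length Q a b \<le> ereal ((b - a) / norm u)"
proof (cases "a = 0")
  case True then show ?thesis using F0b assms by simp
next
  case False
  then have apos: "a > 0" using assms by simp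
  show ?thesis
  proof (rule CL_le)
    fix p assume p: "p \<in> Parts a b"
    obtain m2 t2 where pe: "p = (m2, t2)" by fastforce
    have "curve_length Q 0 a \<le> ereal (b / norm u - Lsum Q p)"
    proof (rule CL_le)
      fix q assume q: "q \<in> Parts 0 a"
      obtain m1 t1 where qe: "q = (m1, t1)" by fastforce
      have c1: "(m1, t1) \<in> Parts 0 a" "(m2, t2) \<in> Parts a b" using q qe p pe by auto
      have "ereal (Lsum Q q + Lsum Q p) \<le> curve_length Q 0 b"
        unfolding qe pe concat(2)[OF c1, symmetric] by (rule CL_ge[OF concat(1)[OF c1]])
      then show "Lsum Q q \<le> b / norm u - Lsum Q p" using F0b assms apos by simp
    qed
    then have "a / norm u \<le> b / norm u - Lsum Q p" using F0b[OF apos] by simp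
    then show "Lsum Q p \<le> (b - a) / norm u" by (simp add: diff_divide_distrib)
  qed
qed

lemma dist_le: assumes "0 \<le> s" "s < t" "t \<le> 1"
  shows "curve_length g s t \<le> ereal (dist (g s) (g t) / norm u)"
proof -
  have "curve_length g s t = curve_length Q (n s) (n t)" using transfer assms by simp
  also have "\<dots> \<le> ereal ((n t - n s) / norm u)"
    using assms nstrict[of s t] by (intro Fbound) (auto simp: nnn)
  also have "\<dots> \<le> ereal (dist (g s) (g t) / norm u)"
    using nu_pos norm_triangle_ineq2[of "g t" "g s"]
    by (auto simp: n_def dist_norm divide_right_mono norm_minus_commute)
  finally show ?thesis .
qed

lemma distortion_g: "distortion g = ereal (1 / norm u)"
proof (rule antisym)
  show "distortion g \<le> ereal (1 / norm u)"
    unfolding distortion_def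
  proof (rule SUP_least)
    fix p assume "p \<in> {(s, t). 0 \<le> s \<and> s < t \<and> t \<le> 1 \<and> g s \<noteq> g t}"
    then obtain s t where pe: "p = (s, t)" and st: "0 \<le> s" "s < t" "t \<le> 1" "g s \<noteq> g t" by auto
    have d: "dist (g s) (g t) > 0" using st by simp
    have "curve_length g s t \<le> ereal (dist (g s) (g t)) * ereal (1 / norm u)"
      using dist_le[OF st(1-3)] by simp
    then have "curve_length g s t / ereal (dist (g s) (g t)) \<le> ereal (1 / norm u)"
      using d by (subst ereal_divide_le_pos) auto
    then show "curve_length g (fst p) (snd p) / ereal (dist (g (fst p)) (g (snd p))) \<le> ereal (1 / norm u)"
      using pe by simp
  qed
next
  have "(0::real, 1::real) \<in> {(s, t). 0 \<le> s \<and> s < t \<and> t \<le> 1 \<and> g s \<noteq> g t}"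
    using g0 g1 nu_pos by auto
  moreover have "curve_length g 0 1 / ereal (dist (g 0) (g 1)) = ereal (1 / norm u)"
    using len g0 g1 nu_pos by (simp add: one_ereal_def)
  ultimately show "ereal (1 / norm u) \<le> distortion g"
    unfolding distortion_def by (metis (mono_tags, lifting) SUP_upper fst_conv snd_conv)
qed

end


lemma part2:
  fixes \<alpha> :: "real \<Rightarrow> real^3" and D :: real
  assumes Dpos: "D > 0" and pa: "path \<alpha>" and len: "curve_length \<alpha> 0 1 = 1"
    and diam: "diameter (\<alpha> ` {0..1}) \<le> 2 * D"
  shows "distortion \<alpha> \<ge> ereal (1 / 2 * (1 / D))"
proof -
  let ?IS = "{(s, t). 0 \<le> s \<and> s < t \<and> t \<le> 1 \<and> \<alpha> s \<noteq> \<alpha> t}"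
  have cont: "continuous_on {0..1} \<alpha>" using pa by (simp add: path_def)
  have bnd: "bounded (\<alpha> ` {0..1})" using compact_path_image[OF pa] by (simp add: path_image_def compact_imp_bounded)
  have key: "\<exists>s t. (s, t) \<in> ?IS \<and> ereal (1 / 2 * (1 / D)) \<le> curve_length \<alpha> s t / ereal (dist (\<alpha> s) (\<alpha> t))"
  proof (cases "\<alpha> 0 = \<alpha> 1")
    case False
    define d where "d = dist (\<alpha> 0) (\<alpha> 1)"
    have dpos: "d > 0" using False by (simp add: d_def)
    have "d \<le> 2 * D" unfolding d_def
      using diameter_bounded_bound[OF bnd, of "\<alpha> 0" "\<alpha> 1"] diam by auto
    then have "1 / 2 * (1 / D) \<le> 1 / d" using dpos Dpos by (simp add: field_simps)
    then have "ereal (1 / 2 * (1 / D)) \<le> curve_length \<alpha> 0 1 / ereal d"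
      using len dpos by (simp add: one_ereal_def)
    moreover have "((0::real), (1::real)) \<in> ?IS" using False by auto
    ultimately show ?thesis unfolding d_def by blast
  next
    case True
    define A where "A = {t \<in> {0..1}. \<alpha> t \<noteq> \<alpha> 0}"
    have Ane: "A \<noteq> {}"
    proof
      assume Ae: "A = {}"
      have "curve_length \<alpha> 0 1 \<le> ereal 0"
      proof (rule CL_le)
        fix p assume p: "p \<in> Parts 0 1"
        obtain m \<tau> where pe: "p = (m, \<tau>)" by fastforce
        have all: "\<forall>t\<in>{0..1}. \<alpha> t = \<alpha> 0" using Ae unfolding A_def by blast
        have "\<alpha> (\<tau> i) = \<alpha> 0" if "i \<le> m" for i
        proof -
          have "\<tau> i \<in> {0..1}" using Parts_range[of m \<tau> 0 1 i] p pe that by simp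
          then show ?thesis using all by blast
        qed
        then have "(\<Sum>i<m. dist (\<alpha> (\<tau> i)) (\<alpha> (\<tau> (Suc i)))) = 0"
          by (intro sum.neutral) simp
        then show "Lsum \<alpha> p \<le> 0" unfolding pe Lsum_def by simp
      qed
      then show False using len by simp
    qed
    have bdd: "bdd_above A" unfolding A_def by (rule bdd_aboveI[of _ 1]) auto
    define T where "T = Sup A"
    have T1: "T \<le> 1" unfolding T_def using Ane by (intro cSup_least) (auto simp: A_def)
    have Apos: "a \<in> A \<Longrightarrow> 0 < a" for a unfolding A_def by (cases "a = 0") auto
    have Tpos: "T > 0" unfolding T_def using Ane Apos cSup_upper[OF _ bdd] by (meson ex_in_conv less_le_trans)
    have above: "\<alpha> x = \<alpha> 0" if "x \<in> {0..1}" "x > T" for x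
    proof (rule ccontr)
      assume "\<alpha> x \<noteq> \<alpha> 0"
      then have "x \<in> A" using that unfolding A_def by auto
      then have "x \<le> T" unfolding T_def using cSup_upper[OF _ bdd] by auto
      then show False using that by simp
    qed
    have aT: "\<alpha> T = \<alpha> 0"
    proof (cases "T = 1")
      case True then show ?thesis using \<open>\<alpha> 0 = \<alpha> 1\<close> by simp
    next
      case False
      then have T1': "T < 1" using T1 by simp
      have cl: "closed {x \<in> {0..1}. \<alpha> x = \<alpha> 0}"
        by (rule continuous_closed_preimage_constant[OF cont]) simp
      have "{T<..1} \<subseteq> {x \<in> {0..1}. \<alpha> x = \<alpha> 0}" using above Tpos by auto
      then have "closure {T<..1} \<subseteq> {x \<in> {0..1}. \<alpha> x = \<alpha> 0}" using cl by (rule closure_minimal)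
      moreover have "T \<in> closure {T<..1}" using T1' by simp
      ultimately show ?thesis by blast
    qed
    have CLT: "curve_length \<alpha> 0 1 \<le> curve_length \<alpha> 0 T"
      unfolding CL_def2[of \<alpha> 0 1]
    proof (rule SUP_least)
      fix p assume p: "p \<in> Parts 0 1"
      obtain m \<tau> where pe: "p = (m, \<tau>)" by fastforce
      have r: "i \<le> m \<Longrightarrow> 0 \<le> \<tau> i \<and> \<tau> i \<le> 1" for i using Parts_range[of m \<tau> 0 1 i] p pe by auto
      have inP: "(m, \<lambda>i. min (\<tau> i) T) \<in> Parts 0 T"
        using p pe Tpos T1 unfolding Parts_def by (auto simp: min_def)
      have eq: "\<alpha> (min (\<tau> i) T) = \<alpha> (\<tau> i)" if "i \<le> m" for i
      proof (cases "\<tau> i \<le> T")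
        case False
        then show ?thesis using above[of "\<tau> i"] r[OF that] aT by auto
      qed simp
      have "Lsum \<alpha> p = Lsum \<alpha> (m, \<lambda>i. min (\<tau> i) T)"
        unfolding pe Lsum_def using eq by (auto intro!: sum.cong)
      then show "ereal (Lsum \<alpha> p) \<le> curve_length \<alpha> 0 T" using CL_ge[OF inP] by simp
    qed
    then have c1: "1 \<le> curve_length \<alpha> 0 T" using len by simp
    have "ereal (1/2) < 1" by (simp add: one_ereal_def)
    then have "ereal (1/2) < curve_length \<alpha> 0 T" using c1 by (rule less_le_trans)
    then obtain p where p: "p \<in> Parts 0 T" and p2: "1/2 < Lsum \<alpha> p"
      unfolding CL_def2 less_SUP_iff by auto
    obtain m \<tau> where pe: "p = (m, \<tau>)" by fastforce
    have pm: "\<forall>i<m. \<tau> i \<le> \<tau> (Suc i)" "\<tau> 0 = 0" "\<tau> m = T" using p pe by (auto simp: Parts_def)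
    define t0 where "t0 = Max (insert 0 (\<tau> ` {i. i \<le> m \<and> \<tau> i < T}))"
    have fin: "finite (insert 0 (\<tau> ` {i. i \<le> m \<and> \<tau> i < T}))" by simp
    have t0T: "t0 < T" unfolding t0_def using fin Tpos by (subst Max_less_iff) auto
    have t0ge: "i \<le> m \<Longrightarrow> \<tau> i < T \<Longrightarrow> \<tau> i \<le> t0" for i unfolding t0_def using fin by (intro Max_ge) auto
    define \<delta> where "\<delta> = min (1/4) (D/2)"
    have dpos: "\<delta> > 0" using Dpos by (simp add: \<delta>_def)
    have "T \<in> {0..1}" using Tpos T1 by simp
    then obtain \<eta> where eta: "\<eta> > 0" "\<forall>x'\<in>{0..1}. dist x' T < \<eta> \<longrightarrow> dist (\<alpha> x') (\<alpha> T) < \<delta>"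
      using cont dpos unfolding continuous_on_iff by blast
    have "max t0 (T - \<eta>) < Sup A" using t0T eta(1) unfolding T_def by simp
    then obtain t where tA: "t \<in> A" and tgt: "max t0 (T - \<eta>) < t"
      using less_cSup_iff[OF Ane bdd] by blast
    have tT: "t \<le> T" unfolding T_def using cSup_upper[OF tA bdd] .
    have t01: "t \<in> {0..1}" and tne: "\<alpha> t \<noteq> \<alpha> 0" using tA unfolding A_def by auto
    have dtT: "dist (\<alpha> t) (\<alpha> T) < \<delta>" using eta(2) t01 tgt tT by (auto simp: dist_real_def)
    define d where "d = dist (\<alpha> 0) (\<alpha> t)"
    have d_eq: "d = dist (\<alpha> t) (\<alpha> T)" unfolding d_def using aT by (simp add: dist_commute)
    have dp: "d > 0" using tne by (simp add: d_def)
    have cl: "(\<Sum>i<m. dist (\<alpha> (\<tau> i)) (\<alpha> (\<tau> (Suc i)))) \<le>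
       (\<Sum>i<m. dist (\<alpha> (min (\<tau> i) t)) (\<alpha> (min (\<tau> (Suc i)) t))) + dist (\<alpha> t) (\<alpha> (\<tau> m))"
    proof (rule clamp)
      show "\<forall>i<m. \<tau> i \<le> \<tau> (Suc i)" using pm(1) .
      show "t \<le> \<tau> m" using tT pm(3) by simp
      show "\<forall>i\<le>m. \<tau> i < \<tau> m \<longrightarrow> \<tau> i \<le> t"
      proof (intro allI impI)
        fix i assume "i \<le> m" "\<tau> i < \<tau> m"
        then have "\<tau> i \<le> t0" using t0ge pm(3) by simp
        then show "\<tau> i \<le> t" using tgt by simp
      qed
    qed
    have inP: "(m, \<lambda>i. min (\<tau> i) t) \<in> Parts 0 t"
    proof -
      have "min (\<tau> 0) t = 0" using pm(2) t01 by simp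
      moreover have "min (\<tau> m) t = t" using pm(3) tT by simp
      moreover have "\<forall>i<m. min (\<tau> i) t \<le> min (\<tau> (Suc i)) t" using pm(1) by (simp add: min.coboundedI1)
      ultimately show ?thesis unfolding Parts_def by simp
    qed
    have "Lsum \<alpha> p \<le> Lsum \<alpha> (m, \<lambda>i. min (\<tau> i) t) + d"
      using cl pm(3) d_eq unfolding pe Lsum_def by simp
    then have "1/2 - d \<le> Lsum \<alpha> (m, \<lambda>i. min (\<tau> i) t)" using p2 by linarith
    then have CLt: "ereal (1/2 - d) \<le> curve_length \<alpha> 0 t"
      using CL_ge[OF inP, of \<alpha>] by (meson ereal_less_eq(3) order_trans)
    have "d / (2 * D) \<le> 1/2 - d"
    proof -
      have "d < 1/4" "d < D/2" using dtT d_eq by (auto simp: \<delta>_def)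
      then have "d / (2 * D) \<le> 1/4" using Dpos by (simp add: field_simps)
      then show ?thesis using \<open>d < 1/4\<close> by simp
    qed
    then have "ereal (d * (1 / 2 * (1 / D))) \<le> ereal (1/2 - d)" by simp
    then have "ereal d * ereal (1 / 2 * (1 / D)) \<le> curve_length \<alpha> 0 t"
      using CLt by (metis order_trans times_ereal.simps(1))
    then have "ereal (1 / 2 * (1 / D)) \<le> curve_length \<alpha> 0 t / ereal d"
      using dp by (subst ereal_le_divide_pos) auto
    moreover have "((0::real), t) \<in> ?IS" using t01 tne Apos[OF tA] by auto
    ultimately show ?thesis unfolding d_def by blast
  qed
  then obtain s t where st: "(s, t) \<in> ?IS" and le: "ereal (1 / 2 * (1 / D)) \<le> curve_length \<alpha> s t / ereal (dist (\<alpha> s) (\<alpha> t))"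
    by blast
  have "curve_length \<alpha> s t / ereal (dist (\<alpha> s) (\<alpha> t)) \<le> distortion \<alpha>"
    unfolding distortion_def using st by (metis (mono_tags, lifting) SUP_upper fst_conv snd_conv)
  then show ?thesis using le by simp
qed


theorem mainTheorem3:
  fixes g :: "real \<Rightarrow> real^3" and e1 e2 u :: "real^3" and c k s1 :: real
  assumes "c > 0" and "k > 0"
    and "norm e1 = 1" and "norm e2 = 1" and "e1 \<bullet> e2 = 0"
    and "arc g"
    and "g ` {0..1} = {0} \<union> {log_spiral c k e1 e2 s | s. s \<le> s1}"
    and "g 0 = 0" and "u = log_spiral c k e1 e2 s1" and "g 1 = u"
    and "curve_length g 0 1 = 1"
  shows "distortion g = ereal (1 / norm u) \<and>
         (\<forall>\<alpha> :: real \<Rightarrow> real^3. path \<alpha> \<and> curve_length \<alpha> 0 1 = 1 \<and>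
             diameter (\<alpha> ` {0..1}) \<le> 2 * norm u
           \<longrightarrow> distortion \<alpha> \<ge> ereal (1 / 2 * (1 / norm u)))"
proof -
  interpret spir g e1 e2 u c k s1
    by (rule spir.intro) (use assms in auto)
  show ?thesis using distortion_g part2[OF nu_pos] by blast
qed

end
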